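(* Let $M$ be a matroid on $[n]$ and $\preceq$ a term order on $\mathbb{R}[x_1,\dots,x_n]$. Then $\mathcal{S}_\preceq(M)=\mathcal{S}_\preceq(M^* )$, where $M^*$ is the dual matroid.
   Context: The basis configuration of $M$ is $V_M=\{\mathbf{e}_B:B \text{ a basis of } M\}\subseteq\{0,1\}^n$ ($\mathbf{e}_B$ the characteristic vector of $B$). $\mathcal{S}_\preceq(M)=\{\tau\subseteq[n]:\prod_{i\in\tau}x_i\notin\mathrm{in}_\preceq(I(V_M))\}$, where $I(V_M)$ is the vanishing ideal of $V_M$ and $\mathrm{in}_\preceq$ denotes the initial ideal. $M^*$ has bases $\{[n]\setminus B: B \text{ a basis of } M\}$. *)

theory Defs
  imports Complex_Main "HOL-Library.Poly_Mapping"
begin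

definition matroid_bases :: "nat \<Rightarrow> nat set set \<Rightarrow> bool" where
  "matroid_bases n \<B> \<longleftrightarrow>
     \<B> \<noteq> {} \<and> (\<forall>B\<in>\<B>. B \<subseteq> {1..n}) \<and>
     (\<forall>B1\<in>\<B>. \<forall>B2\<in>\<B>. \<forall>x\<in>B1 - B2. \<exists>y\<in>B2 - B1. insert y (B1 - {x}) \<in> \<B>)"

definition dual_bases :: "nat \<Rightarrow> nat set set \<Rightarrow> nat set set" where
  "dual_bases n \<B> = (\<lambda>B. {1..n} - B) ` \<B>"

text \<open>Monomials in x_1..x_n are exponent vectors finitely supported nat-to-nat maps with support in {1..n};
  polynomials in R[x_1..x_n] are finitely supported maps from monomials to reals.\<close>
type_synonym mono = "nat \<Rightarrow>\<^sub>0 nat"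
type_synonym mpoly = "mono \<Rightarrow>\<^sub>0 real"

definition mons_in :: "nat \<Rightarrow> mono set" where
  "mons_in n = {m. Poly_Mapping.keys m \<subseteq> {1..n}}"

definition polys :: "nat \<Rightarrow> mpoly set" where
  "polys n = {f. Poly_Mapping.keys f \<subseteq> mons_in n}"

definition term_order :: "nat \<Rightarrow> (mono \<Rightarrow> mono \<Rightarrow> bool) \<Rightarrow> bool" where
  "term_order n ord \<longleftrightarrow>
     (\<forall>a\<in>mons_in n. ord a a) \<and>
     (\<forall>a\<in>mons_in n. \<forall>b\<in>mons_in n. ord a b \<and> ord b a \<longrightarrow> a = b) \<and>
     (\<forall>a\<in>mons_in n. \<forall>b\<in>mons_in n. \<forall>c\<in>mons_in n. ord a b \<and> ord b c \<longrightarrow> ord a c) \<and>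
     (\<forall>a\<in>mons_in n. \<forall>b\<in>mons_in n. ord a b \<or> ord b a) \<and>
     (\<forall>a\<in>mons_in n. ord 0 a) \<and>
     (\<forall>a\<in>mons_in n. \<forall>b\<in>mons_in n. \<forall>c\<in>mons_in n. ord a b \<longrightarrow> ord (a + c) (b + c))"

definition lead_mono :: "(mono \<Rightarrow> mono \<Rightarrow> bool) \<Rightarrow> mpoly \<Rightarrow> mono" where
  "lead_mono ord f = (THE m. m \<in> Poly_Mapping.keys f \<and> (\<forall>m'\<in>Poly_Mapping.keys f. ord m' m))"

definition eval_mono :: "mono \<Rightarrow> (nat \<Rightarrow> real) \<Rightarrow> real" where
  "eval_mono m v = (\<Prod>i\<in>Poly_Mapping.keys m. v i ^ Poly_Mapping.lookup m i)"

definition eval_poly :: "mpoly \<Rightarrow> (nat \<Rightarrow> real) \<Rightarrow> real" where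
  "eval_poly f v = (\<Sum>m\<in>Poly_Mapping.keys f. Poly_Mapping.lookup f m * eval_mono m v)"

definition char_vec :: "nat set \<Rightarrow> nat \<Rightarrow> real" where
  "char_vec B i = (if i \<in> B then 1 else 0)"

definition basis_config :: "nat set set \<Rightarrow> (nat \<Rightarrow> real) set" where
  "basis_config \<B> = char_vec ` \<B>"

definition vanishing_ideal :: "nat \<Rightarrow> (nat \<Rightarrow> real) set \<Rightarrow> mpoly set" where
  "vanishing_ideal n V = {f \<in> polys n. \<forall>v\<in>V. eval_poly f v = 0}"

definition gen_ideal :: "nat \<Rightarrow> mpoly set \<Rightarrow> mpoly set" where
  "gen_ideal n G = {(\<Sum>h\<in>H. c h * h) | c H. finite H \<and> H \<subseteq> G \<and> (\<forall>h\<in>H. c h \<in> polys n)}"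

definition initial_ideal :: "nat \<Rightarrow> (mono \<Rightarrow> mono \<Rightarrow> bool) \<Rightarrow> mpoly set \<Rightarrow> mpoly set" where
  "initial_ideal n ord I =
     gen_ideal n {Poly_Mapping.single (lead_mono ord f) (Poly_Mapping.lookup f (lead_mono ord f)) | f. f \<in> I \<and> f \<noteq> 0}"

definition sqfree_mono :: "nat set \<Rightarrow> mpoly" where
  "sqfree_mono \<tau> = Poly_Mapping.single (\<Sum>i\<in>\<tau>. Poly_Mapping.single i 1) 1"

definition S_complex :: "nat \<Rightarrow> (mono \<Rightarrow> mono \<Rightarrow> bool) \<Rightarrow> nat set set \<Rightarrow> nat set set" where
  "S_complex n ord \<B> =
     {\<tau>. \<tau> \<subseteq> {1..n} \<and> sqfree_mono \<tau> \<notin> initial_ideal n ord (vanishing_ideal n (basis_config \<B>))}"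

end

theory Submission
  imports Defs
begin

lemma eval_poly_alt:
  assumes "finite K" "Poly_Mapping.keys f \<subseteq> K"
  shows "eval_poly f v = (\<Sum>m\<in>K. Poly_Mapping.lookup f m * eval_mono m v)"
  unfolding eval_poly_def using assms
  by (intro sum.mono_neutral_left) (auto simp: in_keys_iff)

lemma eval_poly_add: "eval_poly (p + q) v = eval_poly p v + eval_poly q v"
proof -
  let ?K = "Poly_Mapping.keys p \<union> Poly_Mapping.keys q"
  have "eval_poly (p + q) v = (\<Sum>m\<in>?K. Poly_Mapping.lookup (p+q) m * eval_mono m v)"
    using keys_add[of p q] by (intro eval_poly_alt) auto
  also have "\<dots> = (\<Sum>m\<in>?K. Poly_Mapping.lookup p m * eval_mono m v)
     + (\<Sum>m\<in>?K. Poly_Mapping.lookup q m * eval_mono m v)"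
    by (simp add: lookup_add distrib_right sum.distrib)
  also have "\<dots> = eval_poly p v + eval_poly q v"
    by (subst (1 2) eval_poly_alt[of ?K]) auto
  finally show ?thesis .
qed

lemma eval_poly_zero: "eval_poly 0 v = 0"
  by (simp add: eval_poly_def)

lemma eval_poly_sum: "finite A \<Longrightarrow> eval_poly (\<Sum>a\<in>A. p a) v = (\<Sum>a\<in>A. eval_poly (p a) v)"
  by (induction A rule: finite_induct) (auto simp: eval_poly_zero eval_poly_add)

lemma eval_poly_single: "eval_poly (Poly_Mapping.single m c) v = c * eval_mono m v"
  by (cases "c = 0") (auto simp: eval_poly_def)

definition xT :: "nat set \<Rightarrow> mono" where "xT T = (\<Sum>i\<in>T. Poly_Mapping.single i 1)"

lemma lookup_xT: "finite T \<Longrightarrow> Poly_Mapping.lookup (xT T) i = (if i \<in> T then 1 else 0)"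
  unfolding xT_def by (simp add: lookup_sum lookup_single when_def)

lemma keys_xT: "finite T \<Longrightarrow> Poly_Mapping.keys (xT T) = T"
  by (auto simp: in_keys_iff lookup_xT split: if_splits)

lemma eval_mono_xT: "finite T \<Longrightarrow> eval_mono (xT T) v = (\<Prod>i\<in>T. v i)"
  by (simp add: eval_mono_def keys_xT lookup_xT)

lemma eval_mono_char: "eval_mono m (char_vec X) = (\<Prod>i\<in>Poly_Mapping.keys m. char_vec X i)"
  unfolding eval_mono_def
  by (rule prod.cong) (auto simp: char_vec_def in_keys_iff)


lemma TOs1: "term_order n ord \<Longrightarrow> \<forall>a\<in>mons_in n. ord a a"
  unfolding term_order_def by (elim conjE)

lemma TOs2: "term_order n ord \<Longrightarrow> \<forall>a\<in>mons_in n. \<forall>b\<in>mons_in n. ord a b \<and> ord b a \<longrightarrow> a = b"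
  unfolding term_order_def by (elim conjE)

lemma TOs3: "term_order n ord \<Longrightarrow> \<forall>a\<in>mons_in n. \<forall>b\<in>mons_in n. \<forall>c\<in>mons_in n. ord a b \<and> ord b c \<longrightarrow> ord a c"
  unfolding term_order_def by (elim conjE)

lemma TOs4: "term_order n ord \<Longrightarrow> \<forall>a\<in>mons_in n. \<forall>b\<in>mons_in n. ord a b \<or> ord b a"
  unfolding term_order_def by (elim conjE)

lemma TOs5: "term_order n ord \<Longrightarrow> \<forall>a\<in>mons_in n. ord 0 a"
  unfolding term_order_def by (elim conjE)

lemma TOs6: "term_order n ord \<Longrightarrow> \<forall>a\<in>mons_in n. \<forall>b\<in>mons_in n. \<forall>c\<in>mons_in n. ord a b \<longrightarrow> ord (a + c) (b + c)"
  unfolding term_order_def by (elim conjE)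

lemma to_refl: "term_order n ord \<Longrightarrow> a \<in> mons_in n \<Longrightarrow> ord a a"
  using TOs1 by blast
lemma to_antisym: "term_order n ord \<Longrightarrow> a \<in> mons_in n \<Longrightarrow> b \<in> mons_in n \<Longrightarrow> ord a b \<Longrightarrow> ord b a \<Longrightarrow> a = b"
  using TOs2 by blast
lemma to_trans: "term_order n ord \<Longrightarrow> a \<in> mons_in n \<Longrightarrow> b \<in> mons_in n \<Longrightarrow> c \<in> mons_in n \<Longrightarrow> ord a b \<Longrightarrow> ord b c \<Longrightarrow> ord a c"
  using TOs3 by blast
lemma to_total: "term_order n ord \<Longrightarrow> a \<in> mons_in n \<Longrightarrow> b \<in> mons_in n \<Longrightarrow> \<not> ord a b \<Longrightarrow> ord b a"
  using TOs4 by blast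
lemma to_zero: "term_order n ord \<Longrightarrow> a \<in> mons_in n \<Longrightarrow> ord 0 a"
  using TOs5 by blast
lemma to_add: "term_order n ord \<Longrightarrow> a \<in> mons_in n \<Longrightarrow> b \<in> mons_in n \<Longrightarrow> c \<in> mons_in n \<Longrightarrow> ord a b \<Longrightarrow> ord (a + c) (b + c)"
  using TOs6 by blast

lemma ord_div:
  assumes TO: "term_order n ord" and a: "a \<in> mons_in n" and d: "d \<in> mons_in n"
    and le: "\<And>i. Poly_Mapping.lookup a i \<le> Poly_Mapping.lookup d i"
  shows "ord a d"
proof -
  have eq: "d = (d - a) + a"
    by (rule poly_mapping_eqI) (use le in \<open>simp add: lookup_add lookup_minus\<close>)
  have r: "d - a \<in> mons_in n"
    using d by (auto simp: mons_in_def in_keys_iff lookup_minus)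
  have z: "0 \<in> mons_in n" by (simp add: mons_in_def)
  have "ord 0 (d - a)" by (rule to_zero[OF TO r])
  then have "ord (0 + a) ((d - a) + a)" by (rule to_add[OF TO z r a])
  with eq show ?thesis by simp
qed

lemma lead_exists:
  assumes TO: "term_order n ord" and "finite K" "K \<noteq> {}" "K \<subseteq> mons_in n"
  shows "\<exists>L\<in>K. \<forall>m\<in>K. ord m L"
  using assms(2-4)
proof (induction K rule: finite_ne_induct)
  case (singleton x)
  then show ?case using to_refl[OF TO] by auto
next
  case (insert x F)
  then obtain L where L: "L \<in> F" "\<forall>m\<in>F. ord m L" by auto
  have xn: "x \<in> mons_in n" and Ln: "L \<in> mons_in n" using insert L by auto
  show ?case
  proof (cases "ord x L")
    case True
    then show ?thesis using L by auto
  next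
    case False
    with to_total[OF TO xn Ln] have xL: "ord L x" by blast
    have "\<forall>m\<in>insert x F. ord m x"
    proof
      fix m assume m: "m \<in> insert x F"
      show "ord m x"
      proof (cases "m = x")
        case True then show ?thesis using to_refl[OF TO xn] by simp
      next
        case False
        then have "m \<in> F" "m \<in> mons_in n" using m insert by auto
        then show ?thesis using L xL to_trans[OF TO _ Ln xn] by blast
      qed
    qed
    then show ?thesis by auto
  qed
qed

lemma lead_unique:
  assumes TO: "term_order n ord" and K: "Poly_Mapping.keys g \<subseteq> mons_in n"
    and L: "L \<in> Poly_Mapping.keys g" "\<forall>m\<in>Poly_Mapping.keys g. ord m L"
  shows "lead_mono ord g = L"
  unfolding lead_mono_def
proof (rule the_equality)
  show "L \<in> Poly_Mapping.keys g \<and> (\<forall>m'\<in>Poly_Mapping.keys g. ord m' L)" using L by auto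
next
  fix L' assume H: "L' \<in> Poly_Mapping.keys g \<and> (\<forall>m'\<in>Poly_Mapping.keys g. ord m' L')"
  then have "ord L L'" "ord L' L" using L by auto
  moreover have "L \<in> mons_in n" "L' \<in> mons_in n" using H L K by auto
  ultimately show "L' = L" using to_antisym[OF TO] by metis
qed

lemma lead_props:
  assumes TO: "term_order n ord" and f: "f \<in> polys n" "f \<noteq> 0"
  shows "lead_mono ord f \<in> Poly_Mapping.keys f \<and> (\<forall>m\<in>Poly_Mapping.keys f. ord m (lead_mono ord f))"
proof -
  have K: "Poly_Mapping.keys f \<subseteq> mons_in n" using f by (simp add: polys_def)
  have ne: "Poly_Mapping.keys f \<noteq> {}" using f by simp
  obtain L where L: "L \<in> Poly_Mapping.keys f" "\<forall>m\<in>Poly_Mapping.keys f. ord m L"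
    using lead_exists[OF TO finite_keys ne K] by auto
  with lead_unique[OF TO K L] show ?thesis by simp
qed

definition hpoly :: "mono \<Rightarrow> real \<Rightarrow> mpoly" where
  "hpoly m c = (\<Sum>T\<in>Pow (Poly_Mapping.keys m) - {Poly_Mapping.keys m}.
       Poly_Mapping.single (xT T) (c * (-1) ^ card T))
     + Poly_Mapping.single m (c * (-1) ^ card (Poly_Mapping.keys m))"

lemma keys_hpoly: "Poly_Mapping.keys (hpoly m c) \<subseteq> insert m (xT ` Pow (Poly_Mapping.keys m))"
proof -
  have "Poly_Mapping.keys (hpoly m c) \<subseteq>
     Poly_Mapping.keys (\<Sum>T\<in>Pow (Poly_Mapping.keys m) - {Poly_Mapping.keys m}.
       Poly_Mapping.single (xT T) (c * (-1) ^ card T))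
     \<union> Poly_Mapping.keys (Poly_Mapping.single m (c * (-1) ^ card (Poly_Mapping.keys m)))"
    unfolding hpoly_def by (rule keys_add)
  also have "\<dots> \<subseteq> insert m (xT ` Pow (Poly_Mapping.keys m))"
    using keys_sum[of "\<lambda>T. Poly_Mapping.single (xT T) (c * (-1) ^ card T)"
        "Pow (Poly_Mapping.keys m) - {Poly_Mapping.keys m}"]
    by (auto split: if_splits)
  finally show ?thesis .
qed

lemma lookup_hpoly: "Poly_Mapping.lookup (hpoly m c) m = c * (-1) ^ card (Poly_Mapping.keys m)"
proof -
  have "Poly_Mapping.lookup (Poly_Mapping.single (xT T) (c * (-1) ^ card T)) m = 0"
    if "T \<in> Pow (Poly_Mapping.keys m) - {Poly_Mapping.keys m}" for T
  proof -
    have fin: "finite T" using that finite_subset[OF _ finite_keys] by blast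
    have "xT T \<noteq> m"
    proof
      assume "xT T = m"
      then have "Poly_Mapping.keys (xT T) = Poly_Mapping.keys m" by simp
      with keys_xT[OF fin] that show False by auto
    qed
    then show ?thesis by (simp add: lookup_single when_def)
  qed
  then show ?thesis unfolding hpoly_def by (simp add: lookup_add lookup_sum)
qed

lemma alt_sum:
  assumes "finite S"
  shows "(\<Sum>T\<in>Pow S. (-1) ^ card T * (\<Prod>i\<in>T. w i)) = (\<Prod>i\<in>S. 1 - w i :: real)"
  using prod_diff_conv_sum[OF assms, of "\<lambda>_. 1" w] by simp

lemma eval_hpoly:
  assumes B: "B \<subseteq> {1..n}" and m: "Poly_Mapping.keys m \<subseteq> {1..n}"
  shows "eval_poly (hpoly m c) (char_vec ({1..n} - B)) = c * eval_mono m (char_vec B)"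
proof -
  let ?S = "Poly_Mapping.keys m" and ?w = "char_vec ({1..n} - B)"
  have finS: "finite ?S" by simp
  have fin: "finite (Pow ?S)" by simp
  have "eval_poly (hpoly m c) ?w =
     (\<Sum>T\<in>Pow ?S - {?S}. c * (-1) ^ card T * (\<Prod>i\<in>T. ?w i))
     + c * (-1) ^ card ?S * (\<Prod>i\<in>?S. ?w i)"
    unfolding hpoly_def eval_poly_add
    apply (subst eval_poly_sum, simp)
    apply (simp add: eval_poly_single eval_mono_char)
    apply (rule sum.cong, simp)
    apply (subgoal_tac "finite x")
     apply (simp add: keys_xT)
    apply (blast intro: finite_subset[OF _ finite_keys])
    done
  also have "\<dots> = (\<Sum>T\<in>Pow ?S. c * (-1) ^ card T * (\<Prod>i\<in>T. ?w i))"
    by (subst (2) sum.remove[of _ ?S]) auto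
  also have "\<dots> = c * (\<Sum>T\<in>Pow ?S. (-1) ^ card T * (\<Prod>i\<in>T. ?w i))"
    by (simp add: sum_distrib_left mult.assoc)
  also have "\<dots> = c * (\<Prod>i\<in>?S. 1 - ?w i)" by (simp add: alt_sum)
  also have "(\<Prod>i\<in>?S. 1 - ?w i) = (\<Prod>i\<in>?S. char_vec B i)"
    by (rule prod.cong) (use m in \<open>auto simp: char_vec_def\<close>)
  finally show ?thesis by (simp add: eval_mono_char)
qed


definition Gen :: "(mono \<Rightarrow> mono \<Rightarrow> bool) \<Rightarrow> mpoly set \<Rightarrow> mpoly set" where
  "Gen ord I = {Poly_Mapping.single (lead_mono ord f) (Poly_Mapping.lookup f (lead_mono ord f)) | f. f \<in> I \<and> f \<noteq> 0}"

lemma initial_ideal_Gen: "initial_ideal n ord I = gen_ideal n (Gen ord I)"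
  unfolding initial_ideal_def Gen_def ..

lemma Gen_sub:
  assumes TO: "term_order n ord" and HB: "\<forall>B\<in>\<B>. B \<subseteq> {1..n}"
  shows "Gen ord (vanishing_ideal n (basis_config \<B>))
     \<subseteq> Gen ord (vanishing_ideal n (basis_config (dual_bases n \<B>)))"
proof
  fix x assume "x \<in> Gen ord (vanishing_ideal n (basis_config \<B>))"
  then obtain f where f: "f \<in> vanishing_ideal n (basis_config \<B>)" "f \<noteq> 0"
    and x: "x = Poly_Mapping.single (lead_mono ord f) (Poly_Mapping.lookup f (lead_mono ord f))"
    unfolding Gen_def by blast
  define L where "L = lead_mono ord f"
  have fp: "f \<in> polys n" and fv: "\<forall>v\<in>basis_config \<B>. eval_poly f v = 0"
    using f by (auto simp: vanishing_ideal_def)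
  have K: "Poly_Mapping.keys f \<subseteq> mons_in n" using fp by (simp add: polys_def)
  have LL: "L \<in> Poly_Mapping.keys f" "\<forall>m\<in>Poly_Mapping.keys f. ord m L"
    using lead_props[OF TO fp f(2)] unfolding L_def by auto
  have Ln: "L \<in> mons_in n" using LL K by auto
  define s :: real where "s = (-1) ^ card (Poly_Mapping.keys L)"
  have ss: "s * s = 1"
  proof -
    have "s * s = ((-1) * (-1 :: real)) ^ card (Poly_Mapping.keys L)"
      unfolding s_def by (rule power_mult_distrib[symmetric])
    then show ?thesis by simp
  qed
  define g where "g = (\<Sum>m\<in>Poly_Mapping.keys f. hpoly m (Poly_Mapping.lookup f m * s))"
  have kg: "Poly_Mapping.keys g \<subseteq> (\<Union>m\<in>Poly_Mapping.keys f. insert m (xT ` Pow (Poly_Mapping.keys m)))"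
    unfolding g_def
    by (rule order.trans[OF keys_sum]) (use keys_hpoly in \<open>simp add: UN_mono\<close>)
  have xTn: "xT T \<in> mons_in n" if "m \<in> Poly_Mapping.keys f" "T \<subseteq> Poly_Mapping.keys m" for m T
  proof -
    have "finite T" using that(2) finite_subset[OF _ finite_keys] by blast
    then have "Poly_Mapping.keys (xT T) = T" by (rule keys_xT)
    then show ?thesis using that K by (auto simp: mons_in_def)
  qed
  have kgn: "Poly_Mapping.keys g \<subseteq> mons_in n"
  proof
    fix d assume "d \<in> Poly_Mapping.keys g"
    with kg obtain m where m: "m \<in> Poly_Mapping.keys f" "d \<in> insert m (xT ` Pow (Poly_Mapping.keys m))"
      by blast
    then show "d \<in> mons_in n" using K xTn[OF m(1)] by auto
  qed
  have div: "ord (xT T) m" if "m \<in> Poly_Mapping.keys f" "T \<subseteq> Poly_Mapping.keys m" for m T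
  proof (rule ord_div[OF TO xTn[OF that]])
    show "m \<in> mons_in n" using that K by auto
    have "finite T" using that(2) finite_subset[OF _ finite_keys] by blast
    then show "Poly_Mapping.lookup (xT T) i \<le> Poly_Mapping.lookup m i" for i
      using that(2) by (auto simp: lookup_xT in_keys_iff)
  qed
  have ordg: "\<forall>d\<in>Poly_Mapping.keys g. ord d L"
  proof
    fix d assume "d \<in> Poly_Mapping.keys g"
    with kg obtain m where m: "m \<in> Poly_Mapping.keys f" "d \<in> insert m (xT ` Pow (Poly_Mapping.keys m))"
      by blast
    show "ord d L"
    proof (cases "d = m")
      case True then show ?thesis using m LL by auto
    next
      case False
      then obtain T where T: "T \<subseteq> Poly_Mapping.keys m" "d = xT T" using m by auto
      have "ord (xT T) m" by (rule div[OF m(1) T(1)])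
      moreover have "ord m L" using LL m by auto
      moreover have "m \<in> mons_in n" using m K by auto
      ultimately show ?thesis
        using to_trans[OF TO xTn[OF m(1) T(1)] _ Ln] T(2) by simp
    qed
  qed
  have z: "Poly_Mapping.lookup (hpoly m c) L = 0" if "m \<in> Poly_Mapping.keys f - {L}" for m c
  proof (rule ccontr)
    assume "Poly_Mapping.lookup (hpoly m c) L \<noteq> 0"
    then have "L \<in> Poly_Mapping.keys (hpoly m c)" by (simp add: in_keys_iff)
    then have "L \<in> insert m (xT ` Pow (Poly_Mapping.keys m))" using keys_hpoly by blast
    with that obtain T where T: "T \<subseteq> Poly_Mapping.keys m" "L = xT T" by auto
    have "ord L m" using div[OF _ T(1)] T that by auto
    moreover have "ord m L" using LL that by auto
    moreover have "m \<in> mons_in n" using that K by auto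
    ultimately have "L = m" using to_antisym[OF TO Ln] by simp
    with that show False by auto
  qed
  have lg: "Poly_Mapping.lookup g L = Poly_Mapping.lookup f L"
  proof -
    have "Poly_Mapping.lookup g L = (\<Sum>m\<in>Poly_Mapping.keys f. Poly_Mapping.lookup (hpoly m (Poly_Mapping.lookup f m * s)) L)"
      unfolding g_def by (simp add: lookup_sum)
    also have "\<dots> = Poly_Mapping.lookup (hpoly L (Poly_Mapping.lookup f L * s)) L"
      using z LL(1) by (subst sum.remove[of _ L]) auto
    also have "\<dots> = Poly_Mapping.lookup f L * (s * s)"
      by (simp add: lookup_hpoly s_def mult.assoc)
    finally show ?thesis using ss by simp
  qed
  have Lg: "L \<in> Poly_Mapping.keys g" using lg LL(1) by (simp add: in_keys_iff)
  then have gne: "g \<noteq> 0" by auto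
  have lead: "lead_mono ord g = L" by (rule lead_unique[OF TO kgn Lg ordg])
  have gI: "g \<in> vanishing_ideal n (basis_config (dual_bases n \<B>))"
    unfolding vanishing_ideal_def
  proof (intro CollectI conjI ballI)
    show "g \<in> polys n" using kgn by (simp add: polys_def)
    fix v assume "v \<in> basis_config (dual_bases n \<B>)"
    then obtain B where B: "B \<in> \<B>" "v = char_vec ({1..n} - B)"
      by (auto simp: basis_config_def dual_bases_def)
    have "eval_poly g v = (\<Sum>m\<in>Poly_Mapping.keys f. eval_poly (hpoly m (Poly_Mapping.lookup f m * s)) v)"
      unfolding g_def by (simp add: eval_poly_sum)
    also have "\<dots> = (\<Sum>m\<in>Poly_Mapping.keys f. s * (Poly_Mapping.lookup f m * eval_mono m (char_vec B)))"
    proof (rule sum.cong)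
      fix m assume "m \<in> Poly_Mapping.keys f"
      then have km: "Poly_Mapping.keys m \<subseteq> {1..n}" using K by (auto simp: mons_in_def)
      show "eval_poly (hpoly m (Poly_Mapping.lookup f m * s)) v = s * (Poly_Mapping.lookup f m * eval_mono m (char_vec B))"
        using eval_hpoly[OF _ km, of B] B HB by simp
    qed simp
    also have "\<dots> = s * eval_poly f (char_vec B)"
      by (simp add: eval_poly_def sum_distrib_left)
    also have "\<dots> = 0" using fv B(1) by (simp add: basis_config_def)
    finally show "eval_poly g v = 0" .
  qed
  have "x = Poly_Mapping.single (lead_mono ord g) (Poly_Mapping.lookup g (lead_mono ord g))"
    using x lead lg by (simp add: L_def)
  then show "x \<in> Gen ord (vanishing_ideal n (basis_config (dual_bases n \<B>)))"
    unfolding Gen_def using gI gne by blast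
qed

lemma dual_dual:
  assumes HB: "\<forall>B\<in>\<B>. B \<subseteq> {1..n}"
  shows "dual_bases n (dual_bases n \<B>) = \<B>" "\<forall>B\<in>dual_bases n \<B>. B \<subseteq> {1..n}"
proof -
  have "(\<lambda>B. {1..n} - ({1..n} - B)) ` \<B> = (\<lambda>B. B) ` \<B>"
    by (rule image_cong) (use HB in auto)
  then show "dual_bases n (dual_bases n \<B>) = \<B>"
    unfolding dual_bases_def image_image by simp
  show "\<forall>B\<in>dual_bases n \<B>. B \<subseteq> {1..n}" unfolding dual_bases_def by auto
qed

theorem proposition2p6:
  fixes n :: nat and \<B> :: "nat set set" and ord :: "mono \<Rightarrow> mono \<Rightarrow> bool"
  assumes "matroid_bases n \<B>" and "term_order n ord"
  shows "S_complex n ord \<B> = S_complex n ord (dual_bases n \<B>)"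
proof -
  have HB: "\<forall>B\<in>\<B>. B \<subseteq> {1..n}" using assms(1) by (simp add: matroid_bases_def)
  have "Gen ord (vanishing_ideal n (basis_config \<B>)) = Gen ord (vanishing_ideal n (basis_config (dual_bases n \<B>)))"
    using Gen_sub[OF assms(2) HB] Gen_sub[OF assms(2) dual_dual(2)[OF HB]] dual_dual(1)[OF HB]
    by auto
  then show ?thesis by (simp add: S_complex_def initial_ideal_Gen)
qed

end
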